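(* (a) Let $n\ge2$ and $m$ be integers with $\gcd(m,n)=1$, and let $\lambda=re^{\pi i m/n}$ with $r\in[2^{-1/n},1)$. Then $A_\lambda$ is a $2n$-gon all of whose angles equal $\pi(n-1)/n$; in particular $A_\lambda$ has non-empty interior. (b) Let $n\ge1$ and $m$ be integers with $\gcd(m,2n+1)=1$, and let $\lambda=re^{2\pi i m/(2n+1)}$ with $r\in[2^{-1/(2n+1)},1)$. Then $A_\lambda$ is a $(4n+2)$-gon all of whose angles equal $2n\pi/(2n+1)$; in particular $A_\lambda$ has non-empty interior.
   Context: $A_\lambda=\{\sum_{n\ge0}a_n\lambda^n:a_n\in\{-1,1\}\}$ for $|\lambda|<1$, the attractor of the iterated function system $\{\lambda z-1,\lambda z+1\}$. *)

theory Defs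
  imports "HOL-Analysis.Analysis"
begin

definition attractor :: "complex \<Rightarrow> complex set" where
  "attractor lam = {z. \<exists>a::nat \<Rightarrow> complex. (\<forall>k. a k \<in> {-1, 1}) \<and> z = (\<Sum>k. a k * lam ^ k)}"

definition vertex_angle :: "complex \<Rightarrow> complex \<Rightarrow> complex \<Rightarrow> real" where
  "vertex_angle q p s = arccos (((q - p) \<bullet> (s - p)) / (norm (q - p) * norm (s - p)))"

text \<open>A is a (convex) k-gon with vertices v 0, ..., v (k-1) listed counterclockwise
  (v is k-periodic), every vertex strictly convex, and all interior angles equal theta.\<close>
definition polygon_all_angles :: "complex set \<Rightarrow> nat \<Rightarrow> real \<Rightarrow> bool" where
  "polygon_all_angles A k \<theta> \<longleftrightarrow> k \<ge> 3 \<and>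
     (\<exists>v::nat \<Rightarrow> complex.
        (\<forall>j. v (j + k) = v j) \<and>
        (\<forall>i j. i mod k \<noteq> j mod k \<and> i mod k \<noteq> (Suc j) mod k \<longrightarrow>
               Im ((v i - v j) * cnj (v (Suc j) - v j)) > 0) \<and>
        A = convex hull (v ` {..<k}) \<and>
        (\<forall>j<k. vertex_angle (v (j + k - 1)) (v j) (v (Suc j)) = \<theta>))"

end

theory Submission
  imports Defs
begin
definition ww :: "nat \<Rightarrow> complex" where "ww N = cis (pi / real N)"

definition zono :: "nat \<Rightarrow> (nat \<Rightarrow> real) \<Rightarrow> complex set" where
  "zono N c = {z. \<exists>t. (\<forall>p<N. \<bar>t p\<bar> \<le> 1) \<and> z = (\<Sum>p<N. of_real (t p * c p) * ww N ^ p)}"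

definition uu :: "nat \<Rightarrow> (nat \<Rightarrow> real) \<Rightarrow> nat \<Rightarrow> complex" where
  "uu N c j = (\<Sum>p<N. of_real ((if p < j then 1 else -1) * c p) * ww N ^ p)"

definition vv :: "nat \<Rightarrow> (nat \<Rightarrow> real) \<Rightarrow> nat \<Rightarrow> complex" where
  "vv N c j = (if j mod (2*N) < N then uu N c (j mod (2*N)) else - uu N c (j mod (2*N) - N))"

definition EE :: "nat \<Rightarrow> (nat \<Rightarrow> real) \<Rightarrow> nat \<Rightarrow> complex" where
  "EE N c j = 2 * of_real (c (j mod N)) * ww N ^ j"

lemma ww_pow: "ww N ^ p = cis (pi * real p / real N)"
  by (simp add: ww_def Complex.DeMoivre mult.commute)

lemma ww_N: "N > 0 \<Longrightarrow> ww N ^ N = -1"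
  by (simp add: ww_pow)

lemma ww_add_N: "N > 0 \<Longrightarrow> ww N ^ (j + N) = - (ww N ^ j)"
  by (simp add: power_add ww_N)

lemma ww_2N: "N > 0 \<Longrightarrow> ww N ^ (2 * N) = 1"
  by (simp add: power_mult ww_N mult.commute[of 2] power_mult[symmetric])

lemma ww_pow_mod: "N > 0 \<Longrightarrow> ww N ^ j = ww N ^ (j mod (2*N))"
proof -
  assume N: "N > 0"
  have "ww N ^ j = ww N ^ (j mod (2*N) + (2*N) * (j div (2*N)))" by simp
  also have "\<dots> = ww N ^ (j mod (2*N)) * (ww N ^ (2*N)) ^ (j div (2*N))"
    by (simp only: power_add power_mult)
  also have "\<dots> = ww N ^ (j mod (2*N))" using ww_2N[OF N] by simp
  finally show ?thesis .
qed

lemma uu_N: "uu N c N = - uu N c 0"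
  unfolding uu_def by (simp add: sum_negf[symmetric])

lemma uu_step: assumes "j < N"
  shows "uu N c (Suc j) - uu N c j = 2 * of_real (c j) * ww N ^ j"
proof -
  have "uu N c (Suc j) - uu N c j =
     (\<Sum>p<N. (if p = j then 2 * of_real (c j) * ww N ^ j else 0))"
    unfolding uu_def sum_subtractf[symmetric]
    by (rule sum.cong) (auto simp: algebra_simps)
  also have "\<dots> = 2 * of_real (c j) * ww N ^ j" using assms by simp
  finally show ?thesis .
qed

lemma vv_mod: "vv N c (j mod (2*N)) = vv N c j"
  unfolding vv_def by simp

lemma vv_step: assumes N: "N > 0"
  shows "vv N c (Suc j) - vv N c j = EE N c j"
proof -
  define a where "a = j mod (2*N)"
  have a: "a < 2*N" using N by (simp add: a_def)
  have Sa: "Suc j mod (2*N) = (if Suc a = 2*N then 0 else Suc a)"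
    unfolding a_def by (simp add: mod_Suc)
  have wj: "ww N ^ j = ww N ^ a" using ww_pow_mod[OF N] a_def by simp
  have cj: "j mod N = a mod N" unfolding a_def by (simp add: mod_mod_cancel)
  show ?thesis
  proof (cases "a < N")
    case True
    then have va: "vv N c j = uu N c a" by (simp add: vv_def a_def)
    show ?thesis
    proof (cases "Suc a < N")
      case True
      then have "vv N c (Suc j) = uu N c (Suc a)" using Sa by (simp add: vv_def)
      then show ?thesis using va uu_step[of a N c] True wj cj \<open>a < N\<close> by (simp add: EE_def)
    next
      case False
      then have "Suc a = N" using \<open>a < N\<close> by simp
      then have "vv N c (Suc j) = - uu N c 0" using Sa N by (simp add: vv_def)
      also have "\<dots> = uu N c (Suc a)" using uu_N \<open>Suc a = N\<close> by simp
      finally show ?thesis using va uu_step[of a N c] wj cj \<open>a < N\<close> by (simp add: EE_def)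
    qed
  next
    case False
    then have va: "vv N c j = - uu N c (a - N)" by (simp add: vv_def a_def)
    have am: "a mod N = a - N" using False a by (simp add: le_mod_geq)
    have wa: "ww N ^ a = - (ww N ^ (a - N))" using ww_add_N[OF N, of "a - N"] False by simp
    have st: "uu N c (Suc (a - N)) - uu N c (a - N) = 2 * of_real (c (a - N)) * ww N ^ (a - N)"
      using uu_step[of "a - N" N c] a by simp
    show ?thesis
    proof (cases "Suc a = 2 * N")
      case False
      then have "vv N c (Suc j) = - uu N c (Suc (a - N))" using Sa \<open>\<not> a < N\<close> a
        by (simp add: vv_def Suc_diff_le)
      then have "vv N c (Suc j) - vv N c j = - (uu N c (Suc (a - N)) - uu N c (a - N))"
        using va by simp
      then show ?thesis using st wj cj am wa by (simp add: EE_def)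
    next
      case True
      then have "vv N c (Suc j) = uu N c 0" using Sa N by (simp add: vv_def)
      also have "\<dots> = - uu N c (Suc (a - N))" proof -
        have "Suc (a - N) = N" using True by simp
        then show ?thesis using uu_N[of N c] by simp
      qed
      finally have "vv N c (Suc j) - vv N c j = - (uu N c (Suc (a - N)) - uu N c (a - N))"
        using va by simp
      then show ?thesis using st wj cj am wa by (simp add: EE_def)
    qed
  qed
qed

lemma vv_tele: assumes "N > 0"
  shows "vv N c (b + s) - vv N c b = (\<Sum>u<s. EE N c (b + u))"
proof (induction s)
  case 0 then show ?case by simp
next
  case (Suc s)
  have "vv N c (b + Suc s) - vv N c b = (vv N c (Suc (b + s)) - vv N c (b + s)) + (vv N c (b + s) - vv N c b)"
    by simp
  then show ?case using Suc vv_step[OF assms, of c "b + s"] by simp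
qed

lemma EE_mod: assumes "N > 0" shows "EE N c j = EE N c (j mod (2*N))"
proof -
  have "j mod N = j mod (2 * N) mod N" by (simp add: mod_mod_cancel)
  then show ?thesis unfolding EE_def using ww_pow_mod[OF assms, of j] by simp
qed

lemma EE_prod: assumes "N > 0"
  shows "EE N c (b + u) * cnj (EE N c b) = of_real (4 * c ((b+u) mod N) * c (b mod N)) * cis (pi * real u / real N)"
proof -
  have "ww N ^ (b + u) * cnj (ww N ^ b) = cis (pi * real u / real N)"
    by (simp add: ww_pow cis_cnj cis_mult[symmetric] add_divide_distrib distrib_left
        flip: cis_mult) (simp add: cis_mult algebra_simps add_divide_distrib)
  then show ?thesis unfolding EE_def by (simp add: algebra_simps)
qed

lemma Im_EE: assumes "N > 0"
  shows "Im (EE N c (b + u) * cnj (EE N c b)) = 4 * c ((b+u) mod N) * c (b mod N) * sin (pi * real u / real N)"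
  using EE_prod[OF assms, of c b u] by simp

lemma Re_EE: assumes "N > 0"
  shows "Re (EE N c (b + u) * cnj (EE N c b)) = 4 * c ((b+u) mod N) * c (b mod N) * cos (pi * real u / real N)"
  using EE_prod[OF assms, of c b u] by simp

lemma vv_period: "vv N c (b + 2 * N) = vv N c b"
  by (metis vv_mod mod_add_self2)

lemma strict_conv:
  assumes N: "N \<ge> 2" and c: "\<forall>p<N. c p > 0" and s: "2 \<le> s" "s < 2 * N"
  shows "Im ((vv N c (b + s) - vv N c b) * cnj (EE N c b)) > 0"
proof -
  have N0: "N > 0" using N by simp
  have cpos: "\<And>j. c (j mod N) > 0" using c N0 by simp
  show ?thesis
  proof (cases "s \<le> N + 1")
    case True
    have "Im ((vv N c (b + s) - vv N c b) * cnj (EE N c b)) = (\<Sum>u<s. Im (EE N c (b + u) * cnj (EE N c b)))"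
      by (simp add: vv_tele[OF N0] sum_distrib_right Im_sum)
    also have "\<dots> = (\<Sum>u<s. 4 * c ((b+u) mod N) * c (b mod N) * sin (pi * real u / real N))"
      by (simp only: Im_EE[OF N0])
    also have "\<dots> > 0"
    proof (rule sum_pos2[where i = 1])
      show "1 \<in> {..<s}" using s by simp
      have "sin (pi * real 1 / real N) > 0"
        using N by (intro sin_gt_zero) (auto simp: field_simps)
      then show "0 < 4 * c ((b + 1) mod N) * c (b mod N) * sin (pi * real 1 / real N)"
        using cpos by simp
    next
        fix i assume "i \<in> {..<s}"
        then have "real i \<le> real N" using True by simp
        then have "sin (pi * real i / real N) \<ge> 0"
          using N0 by (intro sin_ge_zero) (auto simp: field_simps)
        then show "0 \<le> 4 * c ((b + i) mod N) * c (b mod N) * sin (pi * real i / real N)"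
          using cpos[of "b+i"] cpos[of b] by simp
    qed simp
    finally show ?thesis .
  next
    case False
    have "vv N c (b + s) - vv N c b = - (vv N c (b + s + (2 * N - s)) - vv N c (b + s))"
      using vv_period[of N c b] s by simp
    also have "\<dots> = - (\<Sum>u<2 * N - s. EE N c (b + (s + u)))"
      using vv_tele[OF N0, of c "b + s" "2 * N - s"] by (simp add: add.assoc)
    finally have "Im ((vv N c (b + s) - vv N c b) * cnj (EE N c b)) =
       (\<Sum>u<2 * N - s. - Im (EE N c (b + (s + u)) * cnj (EE N c b)))"
      by (simp only: sum_distrib_right Im_sum sum_negf[symmetric] mult_minus_left uminus_complex.sel minus_minus)
    also have "\<dots> = (\<Sum>u<2 * N - s. - (4 * c ((b+(s+u)) mod N) * c (b mod N) * sin (pi * real (s+u) / real N)))"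
      by (simp only: Im_EE[OF N0])
    also have "\<dots> > 0"
    proof (rule sum_pos)
      show "{..<2 * N - s} \<noteq> {}" using s by (simp add: lessThan_empty_iff)
      fix i assume "i \<in> {..<2 * N - s}"
      then have i: "real (s + i) < 2 * real N" "real N + 1 < real (s + i)" using False by auto
      have "sin (pi * real (s + i) / real N) < 0"
      proof (rule sin_lt_zero)
        have "pi * real N < pi * real (s + i)" using i by simp
        then show "pi < pi * real (s + i) / real N" using N0 by (simp add: field_simps)
        have "pi * real (s + i) < pi * (2 * real N)" using i by simp
        then show "pi * real (s + i) / real N < 2 * pi" using N0 by (simp add: field_simps)
      qed
      then show "0 < - (4 * c ((b+(s+i)) mod N) * c (b mod N) * sin (pi * real (s+i) / real N))"
        using cpos[of "b+(s+i)"] cpos[of b] by (simp add: mult_pos_neg)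
    qed simp
    finally show ?thesis .
  qed
qed

lemma poly_cond:
  assumes N: "N \<ge> 2" and c: "\<forall>p<N. c p > 0"
    and h: "i mod (2*N) \<noteq> j mod (2*N)" "i mod (2*N) \<noteq> Suc j mod (2*N)"
  shows "Im ((vv N c i - vv N c j) * cnj (vv N c (Suc j) - vv N c j)) > 0"
proof -
  have N0: "N > 0" using N by simp
  define K where "K = 2 * N"
  define a where "a = i mod K"
  define b where "b = j mod K"
  have aK: "a < K" and bK: "b < K" using N0 by (auto simp: a_def b_def K_def)
  have Sb: "Suc j mod K = Suc b mod K" by (simp add: b_def mod_Suc_eq)
  have E: "vv N c (Suc j) - vv N c j = EE N c b"
    using vv_step[OF N0, of c j] EE_mod[OF N0, of c j] by (simp add: b_def K_def)
  have vi: "vv N c i = vv N c a" and vj: "vv N c j = vv N c b"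
    using vv_mod[of N c] by (simp_all add: a_def b_def K_def)
  have ab: "a \<noteq> b" "a \<noteq> Suc b mod K" using h Sb by (simp_all add: a_def b_def K_def)
  show ?thesis
  proof (cases "b < a")
    case True
    then have "Suc b < K" using aK by simp
    then have "a \<noteq> Suc b" using ab by simp
    then have s: "2 \<le> a - b" "a - b < 2 * N" using True aK by (auto simp: K_def)
    have "a = b + (a - b)" using True by simp
    then show ?thesis using strict_conv[OF N c s, of b] E vi vj by simp
  next
    case False
    then have "a < b" using ab by simp
    have "a + K \<noteq> b + 1"
    proof
      assume "a + K = b + 1"
      then have "a = 0" "b = K - 1" using bK by auto
      then have "Suc b mod K = a" using aK by simp
      then show False using ab by simp
    qed
    then have s: "2 \<le> a + K - b" "a + K - b < 2 * N" using \<open>a < b\<close> bK by (auto simp: K_def)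
    have "vv N c a = vv N c (a + 2 * N)" using vv_period by simp
    also have "a + 2 * N = b + (a + K - b)" using \<open>a < b\<close> bK by (simp add: K_def)
    finally show ?thesis using strict_conv[OF N c s, of b] E vi vj by simp
  qed
qed

lemma norm_EE: "norm (EE N c j) = 2 * \<bar>c (j mod N)\<bar>"
  by (simp add: EE_def norm_mult ww_pow norm_power)

lemma angle_cond:
  assumes N: "N \<ge> 2" and c: "\<forall>p<N. c p > 0"
  shows "vertex_angle (vv N c (j + 2 * N - 1)) (vv N c j) (vv N c (Suc j)) = pi * (real N - 1) / real N"
proof -
  have N0: "N > 0" using N by simp
  define k where "k = j + (2 * N - 1)"
  have jk: "j + 2 * N - 1 = k" using N0 by (simp add: k_def)
  have "vv N c (Suc k) - vv N c k = EE N c k" using vv_step[OF N0] .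
  moreover have "Suc k = j + 2 * N" using N0 by (simp add: k_def)
  ultimately have "vv N c j - vv N c k = EE N c k" using vv_period[of N c j] by simp
  then have q: "vv N c k - vv N c j = - EE N c k" by (simp add: algebra_simps)
  have s: "vv N c (Suc j) - vv N c j = EE N c j" using vv_step[OF N0] .
  have cpos: "\<And>j. c (j mod N) > 0" using c N0 by simp
  have inner: "(- EE N c k) \<bullet> EE N c j = - Re (EE N c (j + (2 * N - 1)) * cnj (EE N c j))"
    by (simp add: inner_complex_def k_def)
  have cosv: "cos (pi * real (2 * N - 1) / real N) = cos (pi / real N)"
  proof -
    have "pi * real (2 * N - 1) / real N = - (pi / real N) + 2 * pi"
      using N0 by (simp add: of_nat_diff field_simps)
    then show ?thesis by (simp add: cos_periodic)
  qed
  have X: "Re (EE N c k * cnj (EE N c j)) = 4 * c (k mod N) * c (j mod N) * cos (pi / real N)"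
    unfolding k_def by (simp only: Re_EE[OF N0] cosv)
  have nk: "norm (- EE N c k) = 2 * c (k mod N)" using cpos[of k] by (simp add: norm_EE)
  have nj: "norm (EE N c j) = 2 * c (j mod N)" using cpos[of j] by (simp add: norm_EE)
  have "(- EE N c k) \<bullet> EE N c j / (norm (- EE N c k) * norm (EE N c j))
      = - (4 * c (k mod N) * c (j mod N) * cos (pi / real N)) / ((2 * c (k mod N)) * (2 * c (j mod N)))"
    unfolding nk nj inner[folded k_def] X by simp
  also have "\<dots> = cos (pi - pi / real N)"
    using cpos[of k] cpos[of j] by (simp add: cos_diff)
  finally have r: "(- EE N c k) \<bullet> EE N c j / (norm (- EE N c k) * norm (EE N c j)) = cos (pi - pi / real N)" .
  have "vertex_angle (vv N c (j + 2 * N - 1)) (vv N c j) (vv N c (Suc j)) = arccos (cos (pi - pi / real N))"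
    unfolding vertex_angle_def jk q s r by simp
  also have "\<dots> = pi - pi / real N"
    using N0 by (intro arccos_cos) (auto simp: field_simps)
  also have "\<dots> = pi * (real N - 1) / real N" using N0 by (simp add: field_simps)
  finally show ?thesis .
qed

lemma zono_convex: "convex (zono N c)"
  unfolding convex_def
proof (intro ballI allI impI)
  fix x y and u v :: real
  assume x: "x \<in> zono N c" and y: "y \<in> zono N c" and uv: "0 \<le> u" "0 \<le> v" "u + v = 1"
  obtain t where t: "\<forall>p<N. \<bar>t p\<bar> \<le> 1" "x = (\<Sum>p<N. of_real (t p * c p) * ww N ^ p)"
    using x unfolding zono_def by blast
  obtain t' where t': "\<forall>p<N. \<bar>t' p\<bar> \<le> 1" "y = (\<Sum>p<N. of_real (t' p * c p) * ww N ^ p)"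
    using y unfolding zono_def by blast
  define t2 where "t2 p = u * t p + v * t' p" for p
  have "\<forall>p<N. \<bar>t2 p\<bar> \<le> 1"
  proof (intro allI impI)
    fix p assume "p < N"
    have "\<bar>t2 p\<bar> \<le> u * \<bar>t p\<bar> + v * \<bar>t' p\<bar>" unfolding t2_def using uv
      by (metis abs_mult abs_of_nonneg abs_triangle_ineq)
    also have "\<dots> \<le> u * 1 + v * 1" using uv t(1) t'(1) \<open>p < N\<close>
      by (intro add_mono mult_left_mono) auto
    finally show "\<bar>t2 p\<bar> \<le> 1" using uv by simp
  qed
  moreover have "u *\<^sub>R x + v *\<^sub>R y = (\<Sum>p<N. of_real (t2 p * c p) * ww N ^ p)"
    unfolding t(2) t'(2) t2_def scaleR_sum_right sum.distrib[symmetric]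
    by (rule sum.cong) (auto simp: scaleR_conv_of_real algebra_simps)
  ultimately show "u *\<^sub>R x + v *\<^sub>R y \<in> zono N c" unfolding zono_def by blast
qed

lemma uu_in: "uu N c j \<in> zono N c" "- uu N c j \<in> zono N c"
proof -
  show "uu N c j \<in> zono N c" unfolding zono_def uu_def
    by (rule CollectI, rule exI[where x = "\<lambda>p. if p < j then 1 else -1"]) auto
  show "- uu N c j \<in> zono N c" unfolding zono_def uu_def
    by (rule CollectI, rule exI[where x = "\<lambda>p. if p < j then -1 else 1"])
       (auto simp: sum_negf[symmetric] intro!: sum.cong)
qed

lemma vv_in: "vv N c j \<in> zono N c"
  unfolding vv_def using uu_in by auto

lemma uu_in_range: assumes N0: "N > 0" and j: "j \<le> N"
  shows "uu N c j \<in> vv N c ` {..<2*N}" "- uu N c j \<in> vv N c ` {..<2*N}"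
proof -
  show "uu N c j \<in> vv N c ` {..<2*N}"
  proof (cases "j < N")
    case True
    then have "vv N c j = uu N c j" by (simp add: vv_def)
    then show ?thesis using True by (metis image_eqI lessThan_iff less_trans N0 mult_2 trans_less_add1)
  next
    case False
    then have "j = N" using j by simp
    then have "vv N c N = uu N c j" using N0 by (simp add: vv_def uu_N)
    then show ?thesis using N0 by (metis image_eqI lessThan_iff mult_2 less_add_same_cancel1)
  qed
  show "- uu N c j \<in> vv N c ` {..<2*N}"
  proof (cases "j < N")
    case True
    then have "vv N c (j + N) = - uu N c j" by (simp add: vv_def)
    then show ?thesis using True by (metis image_eqI lessThan_iff mult_2 add_less_mono1)
  next
    case False
    then have "j = N" using j by simp
    then have "vv N c 0 = - uu N c j" using N0 by (simp add: vv_def uu_N)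
    then show ?thesis using N0 by (metis image_eqI lessThan_iff mult_pos_pos zero_less_numeral)
  qed
qed

lemma inner_eq: "x \<bullet> y = Re (x * cnj y)"
  by (simp add: inner_complex_def)

lemma inner_cis: "a \<bullet> cis \<theta> = cmod a * cos (\<theta> - Arg a)"
proof -
  have "a = of_real (cmod a) * cis (Arg a)" using rcis_cmod_Arg[of a] by (simp add: rcis_def)
  then have "a \<bullet> cis \<theta> = Re (of_real (cmod a) * (cis (Arg a) * cis (- \<theta>)))"
    by (metis inner_eq cis_cnj mult.assoc)
  also have "\<dots> = cmod a * cos (Arg a - \<theta>)"
    by (simp only: cis_mult) simp
  finally show ?thesis by (simp add: cos_diff mult.commute)
qed


lemma rep: assumes N0: "N > 0"
  shows "\<exists>\<sigma> x0. 0 \<le> x0 \<and> x0 < real N \<and> (\<forall>p. a \<bullet> ww N ^ p = \<sigma> * sin (pi * (real p - x0) / real N))"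
proof -
  define \<beta> where "\<beta> = Arg a"
  define y where "y = real N * (\<beta> - pi / 2) / pi"
  have Nr: "real N > 0" using N0 by simp
  have key: "a \<bullet> ww N ^ p = cmod a * sin (pi * (real p - y) / real N)" for p
  proof -
    have e: "pi * (real p - y) / real N = (pi * real p / real N - \<beta>) + pi / 2"
      using Nr by (simp add: y_def field_simps)
    show ?thesis unfolding ww_pow inner_cis e \<beta>_def[symmetric] by (simp add: sin_add)
  qed
  have b: "- pi < \<beta>" "\<beta> \<le> pi" using Arg_bounded[of a] by (auto simp: \<beta>_def)
  have yb: "y \<le> real N / 2" "- 3 * real N / 2 < y"
  proof -
    have "y = real N * \<beta> / pi - real N / 2" by (simp add: y_def field_simps)
    moreover have "real N * \<beta> / pi \<le> real N" using b Nr
      by (simp add: divide_le_eq mult.commute mult_left_mono)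
    moreover have "- real N < real N * \<beta> / pi" using b Nr
    proof -
      have "- pi * real N < \<beta> * real N" using b Nr by (intro mult_strict_right_mono) auto
      then show ?thesis using Nr by (simp add: less_divide_eq mult.commute)
    qed
    ultimately show "y \<le> real N / 2" "- 3 * real N / 2 < y" by auto
  qed
  show ?thesis
  proof (cases "0 \<le> y")
    case True
    then show ?thesis using key yb Nr by (intro exI[of _ "cmod a"] exI[of _ y]) auto
  next
    case False
    show ?thesis
    proof (cases "- real N \<le> y")
      case True
      have "a \<bullet> ww N ^ p = - cmod a * sin (pi * (real p - (y + real N)) / real N)" for p
      proof -
        have "pi * (real p - y) / real N = pi * (real p - (y + real N)) / real N + pi"
          using Nr by (simp add: field_simps)
        then show ?thesis unfolding key by (simp add: sin_periodic_pi)
      qed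
      then show ?thesis using True False by (intro exI[of _ "- cmod a"] exI[of _ "y + real N"]) auto
    next
      case F2: False
      have "a \<bullet> ww N ^ p = cmod a * sin (pi * (real p - (y + 2 * real N)) / real N)" for p
      proof -
        have "pi * (real p - y) / real N = pi * (real p - (y + 2 * real N)) / real N + 2 * pi"
          using Nr by (simp add: field_simps)
        then show ?thesis unfolding key by (simp add: sin_periodic)
      qed
      then show ?thesis using F2 yb by (intro exI[of _ "cmod a"] exI[of _ "y + 2 * real N"]) auto
    qed
  qed
qed

lemma inner_zsum: "a \<bullet> (\<Sum>p<N. of_real (x p) * ww N ^ p) = (\<Sum>p<N. x p * (a \<bullet> ww N ^ p))"
  by (simp add: inner_sum_right scaleR_conv_of_real[symmetric])

lemma term_ineq:
  fixes e s sg sn t cc \<sigma> :: real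
  assumes "e * \<sigma> = \<bar>\<sigma>\<bar>" "sg * sn = - \<bar>sn\<bar>" "\<bar>t\<bar> \<le> 1" "cc > 0"
  shows "e * sg * cc * (\<sigma> * sn) \<le> t * cc * (\<sigma> * sn)"
proof -
  have "e * sg * cc * (\<sigma> * sn) = cc * ((e * \<sigma>) * (sg * sn))" by (simp only: ac_simps)
  also have "\<dots> = - cc * \<bar>\<sigma> * sn\<bar>" unfolding assms(1,2) by (simp add: abs_mult)
  also have "\<dots> \<le> - \<bar>t * cc * (\<sigma> * sn)\<bar>"
  proof -
    have "\<bar>t\<bar> * (cc * \<bar>\<sigma> * sn\<bar>) \<le> 1 * (cc * \<bar>\<sigma> * sn\<bar>)"
      using assms(3,4) by (intro mult_right_mono) auto
    then show ?thesis using assms(4) by (simp add: abs_mult)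
  qed
  also have "\<dots> \<le> t * cc * (\<sigma> * sn)" by simp
  finally show ?thesis .
qed

lemma support:
  assumes N0: "N > 0" and c: "\<forall>p<N. c p > 0"
  shows "\<exists>x \<in> vv N c ` {..<2*N}. \<forall>z \<in> zono N c. a \<bullet> x \<le> a \<bullet> z"
proof -
  obtain \<sigma> x0 where x0: "0 \<le> x0" "x0 < real N"
    and h: "\<And>p. a \<bullet> ww N ^ p = \<sigma> * sin (pi * (real p - x0) / real N)"
    using rep[OF N0, of a] by blast
  define j where "j = nat \<lceil>x0\<rceil>"
  have jN: "j \<le> N" using x0 by (simp add: j_def nat_le_iff ceiling_le_iff)
  define sn where "sn p = sin (pi * (real p - x0) / real N)" for p
  define sg where "sg p = (if p < j then 1 else - 1 :: real)" for p
  have Nr: "real N > 0" using N0 by simp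
  have sgsn: "sg p * sn p = - \<bar>sn p\<bar>" if "p < N" for p
  proof (cases "p < j")
    case True
    then have "real p < x0" using x0 by (simp add: j_def zless_nat_eq_int_zless less_ceiling_iff)
    have "0 \<le> sin (pi * (x0 - real p) / real N)"
    proof (rule sin_ge_zero)
      show "0 \<le> pi * (x0 - real p) / real N" using \<open>real p < x0\<close> Nr by simp
      have "x0 - real p \<le> real N" using x0 by simp
      then have "pi * (x0 - real p) \<le> pi * real N" by simp
      then show "pi * (x0 - real p) / real N \<le> pi" using Nr by (simp add: divide_le_eq mult.commute)
    qed
    moreover have "sn p = - sin (pi * (x0 - real p) / real N)"
    proof -
      have "pi * (real p - x0) / real N = - (pi * (x0 - real p) / real N)" by (metis minus_diff_eq mult_minus_right minus_divide_left)
      then show ?thesis unfolding sn_def by (simp only: sin_minus)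
    qed
    ultimately show ?thesis using True by (simp add: sg_def)
  next
    case False
    then have "x0 \<le> real p" using x0 by (simp add: j_def zless_nat_eq_int_zless less_ceiling_iff not_less)
    have "0 \<le> sn p" unfolding sn_def
    proof (rule sin_ge_zero)
      show "0 \<le> pi * (real p - x0) / real N" using \<open>x0 \<le> real p\<close> Nr by simp
      have "real p - x0 \<le> real N" using x0 that by simp
      then have "pi * (real p - x0) \<le> pi * real N" by simp
      then show "pi * (real p - x0) / real N \<le> pi" using Nr by (simp add: divide_le_eq mult.commute)
    qed
    then show ?thesis using False by (simp add: sg_def)
  qed
  define e where "e = (if \<sigma> \<ge> 0 then 1 else - 1 :: real)"
  have e\<sigma>: "e * \<sigma> = \<bar>\<sigma>\<bar>" by (simp add: e_def)
  define x where "x = (\<Sum>p<N. of_real (e * sg p * c p) * ww N ^ p)"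
  have xr: "x \<in> vv N c ` {..<2*N}"
  proof (cases "\<sigma> \<ge> 0")
    case True
    then have "x = uu N c j" by (simp add: x_def e_def uu_def sg_def)
    then show ?thesis using uu_in_range[OF N0 jN] by simp
  next
    case False
    then have "x = - uu N c j"
      unfolding x_def e_def uu_def sg_def sum_negf[symmetric] using False by (intro sum.cong) auto
    then show ?thesis using uu_in_range[OF N0 jN] by simp
  qed
  have "\<forall>z \<in> zono N c. a \<bullet> x \<le> a \<bullet> z"
  proof
    fix z assume "z \<in> zono N c"
    then obtain t where t: "\<forall>p<N. \<bar>t p\<bar> \<le> 1" "z = (\<Sum>p<N. of_real (t p * c p) * ww N ^ p)"
      unfolding zono_def by blast
    have "a \<bullet> x = (\<Sum>p<N. e * sg p * c p * (\<sigma> * sn p))"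
      unfolding x_def inner_zsum h sn_def ..
    also have "\<dots> \<le> (\<Sum>p<N. t p * c p * (\<sigma> * sn p))"
      by (rule sum_mono, rule term_ineq) (use e\<sigma> sgsn t c in auto)
    also have "\<dots> = a \<bullet> z"
      unfolding t(2) inner_zsum h sn_def ..
    finally show "a \<bullet> x \<le> a \<bullet> z" .
  qed
  then show ?thesis using xr by blast
qed

lemma zono_hull:
  assumes N0: "N > 0" and c: "\<forall>p<N. c p > 0"
  shows "zono N c = convex hull (vv N c ` {..<2*N})"
proof
  show "convex hull (vv N c ` {..<2*N}) \<subseteq> zono N c"
  proof -
    have "vv N c ` {..<2*N} \<subseteq> zono N c" using vv_in by blast
    then show ?thesis using zono_convex[of N c] by (rule hull_minimal)
  qed
  show "zono N c \<subseteq> convex hull (vv N c ` {..<2*N})"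
  proof
    fix z assume z: "z \<in> zono N c"
    show "z \<in> convex hull (vv N c ` {..<2*N})"
    proof (rule ccontr)
      assume nz: "z \<notin> convex hull (vv N c ` {..<2*N})"
      have "closed (convex hull (vv N c ` {..<2*N}))"
        by (intro compact_imp_closed finite_imp_compact_convex_hull) simp
      then obtain a b where ab: "a \<bullet> z < b" "\<forall>x \<in> convex hull (vv N c ` {..<2*N}). b < a \<bullet> x"
        using separating_hyperplane_closed_point[OF convex_convex_hull _ nz] by metis
      obtain x where x: "x \<in> vv N c ` {..<2*N}" "\<forall>z \<in> zono N c. a \<bullet> x \<le> a \<bullet> z"
        using support[OF N0 c, of a] by blast
      have "x \<in> convex hull (vv N c ` {..<2*N})" by (rule hull_inc[OF x(1)])
      then have "b < a \<bullet> x" using ab(2) by blast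
      moreover have "a \<bullet> x \<le> a \<bullet> z" using x(2) z by blast
      ultimately show False using ab(1) by simp
    qed
  qed
qed

lemma zono_poly:
  assumes N: "N \<ge> 2" and c: "\<forall>p<N. c p > 0"
  shows "polygon_all_angles (zono N c) (2*N) (pi * (real N - 1) / real N)"
  unfolding polygon_all_angles_def
proof (intro conjI exI[of _ "vv N c"])
  show "3 \<le> 2 * N" using N by simp
  show "\<forall>j. vv N c (j + 2 * N) = vv N c j" using vv_period by blast
  show "\<forall>i j. i mod (2 * N) \<noteq> j mod (2 * N) \<and> i mod (2 * N) \<noteq> Suc j mod (2 * N) \<longrightarrow>
       0 < Im ((vv N c i - vv N c j) * cnj (vv N c (Suc j) - vv N c j))"
    using poly_cond[OF N c] by blast
  show "zono N c = convex hull vv N c ` {..<2 * N}" using zono_hull[OF _ c] N by simp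
  show "\<forall>j<2 * N. vertex_angle (vv N c (j + 2 * N - 1)) (vv N c j) (vv N c (Suc j)) =
        pi * (real N - 1) / real N"
    using angle_cond[OF N c] by blast
qed

lemma zono_interior:
  assumes N: "N \<ge> 2" and c: "\<forall>p<N. c p > 0"
  shows "interior (zono N c) \<noteq> {}"
proof -
  define s where "s = sin (pi / real N)"
  define co where "co = cos (pi / real N)"
  have Nr: "real N \<ge> 2" using N by simp
  have s0: "s > 0" unfolding s_def using Nr by (intro sin_gt_zero) (auto simp: field_simps)
  have s1: "s \<le> 1" unfolding s_def by simp
  have co1: "\<bar>co\<bar> \<le> 1" unfolding co_def by simp
  have c0: "c 0 > 0" and c1: "c 1 > 0" using c N by auto
  define e where "e = min (c 1 * s) (c 0 * s / 2)"
  have e0: "e > 0" using s0 c0 c1 by (simp add: e_def)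
  have "ball (0::complex) e \<subseteq> zono N c"
  proof
    fix z :: complex assume "z \<in> ball 0 e"
    then have zn: "norm z < e" by simp
    define y where "y = Im z / (c 1 * s)"
    define x where "x = (Re z - y * c 1 * co) / c 0"
    define t where "t p = (if p = 0 then x else if p = 1 then y else 0)" for p :: nat
    have nIm: "\<bar>Im z\<bar> \<le> norm z" by (rule abs_Im_le_cmod)
    have nRe: "\<bar>Re z\<bar> \<le> norm z" by (rule abs_Re_le_cmod)
    have yc: "\<bar>y\<bar> * c 1 = \<bar>Im z\<bar> / s" using c1 s0 by (simp add: y_def abs_mult field_simps)
    have y1: "\<bar>y\<bar> \<le> 1"
    proof -
      have "\<bar>Im z\<bar> \<le> c 1 * s" using nIm zn by (simp add: e_def)
      then show ?thesis using c1 s0 by (simp add: y_def abs_mult divide_le_eq)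
    qed
    have x1: "\<bar>x\<bar> \<le> 1"
    proof -
      have "\<bar>Re z - y * c 1 * co\<bar> \<le> \<bar>Re z\<bar> + \<bar>y\<bar> * c 1 * \<bar>co\<bar>"
      proof -
        have "\<bar>y * c 1 * co\<bar> = \<bar>y\<bar> * c 1 * \<bar>co\<bar>" using c1 by (simp add: abs_mult)
        then show ?thesis using abs_triangle_ineq4[of "Re z" "y * c 1 * co"] by linarith
      qed
      also have "\<dots> \<le> norm z + \<bar>y\<bar> * c 1 * 1"
        using nRe co1 c1 by (intro add_mono mult_left_mono) auto
      also have "\<dots> \<le> norm z / s + norm z / s"
      proof (intro add_mono)
        show "norm z \<le> norm z / s" using s0 s1 by (simp add: le_divide_eq mult_left_le)
        show "\<bar>y\<bar> * c 1 * 1 \<le> norm z / s" using yc nIm s0 by (simp add: divide_right_mono)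
      qed
      also have "\<dots> \<le> c 0"
      proof -
        have "norm z \<le> c 0 * s / 2" using zn by (simp add: e_def)
        then show ?thesis using s0 by (simp add: field_simps)
      qed
      finally show ?thesis using c0 by (simp add: x_def abs_divide divide_le_eq)
    qed
    have tb: "\<forall>p<N. \<bar>t p\<bar> \<le> 1" using x1 y1 by (simp add: t_def)
    have "(\<Sum>p<N. of_real (t p * c p) * ww N ^ p) = (\<Sum>p<2. of_real (t p * c p) * ww N ^ p)"
      using N by (intro sum.mono_neutral_right) (auto simp: t_def)
    also have "\<dots> = of_real (x * c 0) + of_real (y * c 1) * ww N"
      by (simp add: t_def numeral_2_eq_2)
    also have "\<dots> = z"
    proof (rule complex_eqI)
      have w: "ww N = Complex co s" by (simp add: ww_def co_def s_def cis.ctr)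
      show "Re (of_real (x * c 0) + of_real (y * c 1) * ww N) = Re z"
        unfolding w using c0 by (simp add: x_def field_simps)
      show "Im (of_real (x * c 0) + of_real (y * c 1) * ww N) = Im z"
        unfolding w using c1 s0 by (simp add: y_def field_simps)
    qed
    finally show "z \<in> zono N c" unfolding zono_def using tb by auto
  qed
  then have "ball (0::complex) e \<subseteq> interior (zono N c)"
    by (metis interior_maximal open_ball)
  then show ?thesis using e0 by auto
qed

fun gr :: "real \<Rightarrow> real \<Rightarrow> nat \<Rightarrow> real" where
  "gr \<rho> x 0 = x"
| "gr \<rho> x (Suc j) = (gr \<rho> x j - (if gr \<rho> x j \<ge> 0 then 1 else -1)) / \<rho>"

definition gb :: "real \<Rightarrow> real \<Rightarrow> nat \<Rightarrow> real" where
  "gb \<rho> x j = (if gr \<rho> x j \<ge> 0 then 1 else -1)"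

lemma gr_bound:
  assumes r: "1/2 \<le> \<rho>" "\<rho> < 1" and x: "\<bar>x\<bar> \<le> 1 / (1 - \<rho>)"
  shows "\<bar>gr \<rho> x j\<bar> \<le> 1 / (1 - \<rho>)"
proof (induction j)
  case 0 then show ?case using x by simp
next
  case (Suc j)
  define g where "g = gr \<rho> x j"
  have g: "\<bar>g\<bar> \<le> 1 / (1 - \<rho>)" using Suc by (simp add: g_def)
  have r0: "\<rho> > 0" "1 - \<rho> > 0" using r by auto
  have key: "\<bar>g - (if g \<ge> 0 then 1 else -1)\<bar> \<le> \<rho> / (1 - \<rho>)"
  proof -
    have "1 \<le> \<rho> / (1 - \<rho>)" using r r0 by (simp add: le_divide_eq)
    moreover have "1 / (1 - \<rho>) - 1 = \<rho> / (1 - \<rho>)" using r0 by (simp add: field_simps)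
    ultimately show ?thesis using g by (auto simp: abs_le_iff)
  qed
  have "\<bar>gr \<rho> x (Suc j)\<bar> = \<bar>g - (if g \<ge> 0 then 1 else -1)\<bar> / \<rho>"
    using r0 by (simp add: g_def abs_divide)
  also have "\<dots> \<le> (\<rho> / (1 - \<rho>)) / \<rho>" using key r0 by (intro divide_right_mono) auto
  also have "\<dots> = 1 / (1 - \<rho>)" using r0 by simp
  finally show ?case .
qed

lemma gr_sum:
  assumes "\<rho> > 0"
  shows "x = (\<Sum>i<j. gb \<rho> x i * \<rho> ^ i) + \<rho> ^ j * gr \<rho> x j"
proof (induction j)
  case 0 then show ?case by simp
next
  case (Suc j)
  have "\<rho> ^ Suc j * gr \<rho> x (Suc j) = \<rho> ^ j * (gr \<rho> x j - gb \<rho> x j)"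
    using assms by (simp add: gb_def)
  then show ?case using Suc by (simp add: algebra_simps)
qed

lemma gr_sums:
  assumes r: "1/2 \<le> \<rho>" "\<rho> < 1" and x: "\<bar>x\<bar> \<le> 1 / (1 - \<rho>)"
  shows "(\<lambda>i. gb \<rho> x i * \<rho> ^ i) sums x"
proof -
  have r0: "\<rho> > 0" using r by simp
  have "(\<lambda>j. \<rho> ^ j * gr \<rho> x j) \<longlonglongrightarrow> 0"
  proof (rule Lim_null_comparison)
    show "\<forall>\<^sub>F j in sequentially. norm (\<rho> ^ j * gr \<rho> x j) \<le> \<rho> ^ j * (1 / (1 - \<rho>))"
    proof (intro always_eventually allI)
      fix j
      have "\<rho> ^ j * \<bar>gr \<rho> x j\<bar> \<le> \<rho> ^ j * (1 / (1 - \<rho>))"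
        using gr_bound[OF r x, of j] r0 by (intro mult_left_mono) auto
      then show "norm (\<rho> ^ j * gr \<rho> x j) \<le> \<rho> ^ j * (1 / (1 - \<rho>))"
        using r0 by (simp add: abs_mult)
    qed
    show "(\<lambda>j. \<rho> ^ j * (1 / (1 - \<rho>))) \<longlonglongrightarrow> 0"
      using r r0 by (intro tendsto_mult_left_zero LIMSEQ_power_zero) auto
  qed
  then have "(\<lambda>j. x - \<rho> ^ j * gr \<rho> x j) \<longlonglongrightarrow> x - 0" by (intro tendsto_diff) auto
  moreover have "(\<lambda>j. x - \<rho> ^ j * gr \<rho> x j) = (\<lambda>j. \<Sum>i<j. gb \<rho> x i * \<rho> ^ i)"
    using gr_sum[OF r0, of x] by (metis add_diff_cancel_right')
  ultimately show ?thesis unfolding sums_def by simp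
qed

lemma gb_pm: "gb \<rho> x j \<in> {1, -1}"
  by (simp add: gb_def)

lemma regroup:
  fixes f :: "nat \<Rightarrow> complex"
  assumes N0: "N > 0" and r: "0 \<le> r" "r < 1" and fb: "\<And>k. norm (f k) \<le> r ^ k"
  shows "suminf f = (\<Sum>i<N. \<Sum>j. f (j * N + i))"
proof -
  have sf: "summable f"
    by (rule summable_comparison_test[OF _ summable_geometric[of r]]) (use fb r in auto)
  have "(\<lambda>n. sum f {n * N..<n * N + N}) sums suminf f"
    using sums_group[OF summable_sums[OF sf] N0] .
  moreover have "sum f {n * N..<n * N + N} = (\<Sum>i<N. f (n * N + i))" for n
  proof -
    have "sum f {0 + n * N..<N + n * N} = (\<Sum>i = 0..<N. f (i + n * N))"
      by (rule sum.shift_bounds_nat_ivl)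
    then show ?thesis by (simp add: atLeast0LessThan add.commute)
  qed
  ultimately have A: "(\<lambda>n. \<Sum>i<N. f (n * N + i)) sums suminf f" by simp
  have B: "(\<lambda>n. \<Sum>i<N. f (n * N + i)) sums (\<Sum>i<N. \<Sum>j. f (j * N + i))"
  proof (rule sums_sum)
    fix i assume "i \<in> {..<N}"
    have "summable (\<lambda>j. f (j * N + i))"
    proof (rule summable_comparison_test[OF _ summable_geometric[of "r ^ N"]])
      show "\<exists>M. \<forall>n\<ge>M. norm (f (n * N + i)) \<le> (r ^ N) ^ n"
      proof (intro exI allI impI)
        fix n :: nat
        have "norm (f (n * N + i)) \<le> r ^ (n * N + i)" by (rule fb)
        also have "\<dots> \<le> r ^ (n * N)" using r by (intro power_decreasing) auto
        also have "\<dots> = (r ^ N) ^ n" by (simp add: power_mult mult.commute)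
        finally show "norm (f (n * N + i)) \<le> (r ^ N) ^ n" .
      qed
      show "norm (r ^ N) < 1" using r N0 by (simp add: power_less_one_iff abs_of_nonneg)
    qed
    then show "(\<lambda>j. f (j * N + i)) sums (\<Sum>j. f (j * N + i))" by (rule summable_sums)
  qed
  show ?thesis using sums_unique2[OF A B] .
qed

lemma sigma_pow: assumes "\<sigma> \<in> {1, -1::real}" shows "\<sigma> ^ j * \<sigma> ^ j = 1"
proof -
  have "\<sigma> ^ j * \<sigma> ^ j = (\<sigma> * \<sigma>) ^ j" by (rule power_mult_distrib[symmetric])
  moreover have "\<sigma> * \<sigma> = 1" using assms by auto
  ultimately show ?thesis by simp
qed

lemma sigma_pow_pm: assumes "\<sigma> \<in> {1, -1::real}" shows "\<sigma> ^ j \<in> {1, -1}"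
proof (cases "\<sigma> = 1")
  case True then show ?thesis by simp
next
  case False
  then have "\<sigma> = -1" using assms by simp
  then show ?thesis by (cases "even j") simp_all
qed

lemma lam_pow:
  fixes lam :: complex
  assumes "lam ^ N = of_real (\<sigma> * \<rho>)"
  shows "lam ^ (j * N + i) = lam ^ i * of_real ((\<sigma> * \<rho>) ^ j)"
proof -
  have "lam ^ (j * N + i) = (lam ^ N) ^ j * lam ^ i"
    by (simp add: power_add power_mult mult.commute[of j N])
  also have "\<dots> = lam ^ i * (lam ^ N) ^ j" by (rule mult.commute)
  finally show ?thesis by (simp only: assms of_real_power)
qed

lemma attr_eq:
  assumes N0: "N > 0" and r: "0 < r" "r < 1" and nl: "norm lam = r"
    and lN: "lam ^ N = of_real (\<sigma> * r ^ N)" and \<sigma>: "\<sigma> \<in> {1, -1}" and half: "1/2 \<le> r ^ N"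
  shows "attractor lam = {z. \<exists>t. (\<forall>i<N. \<bar>t i\<bar> \<le> 1) \<and> z = (\<Sum>i<N. of_real (t i / (1 - r ^ N)) * lam ^ i)}"
proof -
  define \<rho> where "\<rho> = r ^ N"
  have \<rho>: "0 < \<rho>" "\<rho> < 1" "1/2 \<le> \<rho>" using r half N0 by (auto simp: \<rho>_def power_less_one_iff)
  have lN': "lam ^ N = of_real (\<sigma> * \<rho>)" using lN by (simp add: \<rho>_def)
  have abs\<sigma>: "\<bar>\<sigma>\<bar> = 1" using \<sigma> by auto
  have geo: "summable (\<lambda>j. \<rho> ^ j)" "(\<Sum>j. \<rho> ^ j) = 1 / (1 - \<rho>)"
    using \<rho> by (auto intro!: summable_geometric simp: suminf_geometric)
  show ?thesis unfolding \<rho>_def[symmetric]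
  proof (intro equalityI subsetI)
    fix z assume "z \<in> attractor lam"
    then obtain a where a: "\<forall>k. a k \<in> {-1, 1}" "z = (\<Sum>k. a k * lam ^ k)"
      unfolding attractor_def by blast
    have na: "norm (a k) = 1" for k using a(1) by (metis insertE norm_minus_cancel norm_one singletonD)
    have Ima: "Im (a k) = 0" for k using a(1) by (metis Im_complex_of_real insertE of_real_1 of_real_minus singletonD)
    define g where "g i = (\<Sum>j. a (j * N + i) * of_real ((\<sigma> * \<rho>) ^ j))" for i
    have ng: "norm (a (j * N + i) * of_real ((\<sigma> * \<rho>) ^ j)) = \<rho> ^ j" for i j
      using na \<rho> abs\<sigma> by (simp add: norm_mult norm_power power_mult_distrib abs_mult)
    have sg: "summable (\<lambda>j. a (j * N + i) * of_real ((\<sigma> * \<rho>) ^ j))" for i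
    proof (rule summable_comparison_test[OF _ geo(1)])
      show "\<exists>M. \<forall>n\<ge>M. norm (a (n * N + i) * of_real ((\<sigma> * \<rho>) ^ n)) \<le> \<rho> ^ n"
        by (intro exI[of _ 0] allI impI) (simp only: ng order_refl)
    qed
    have z: "z = (\<Sum>i<N. lam ^ i * g i)"
    proof -
      have "z = (\<Sum>i<N. \<Sum>j. a (j * N + i) * lam ^ (j * N + i))"
        unfolding a(2) by (rule regroup[OF N0, of r]) (use r nl na in \<open>auto simp: norm_mult norm_power\<close>)
      also have "\<dots> = (\<Sum>i<N. lam ^ i * g i)"
      proof (rule sum.cong[OF refl])
        fix i
        have "(\<Sum>j. a (j * N + i) * lam ^ (j * N + i)) = (\<Sum>j. lam ^ i * (a (j * N + i) * of_real ((\<sigma> * \<rho>) ^ j)))"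
          unfolding lam_pow[OF lN'] by (simp add: ac_simps)
        also have "\<dots> = lam ^ i * g i" unfolding g_def by (rule suminf_mult[OF sg])
        finally show "(\<Sum>j. a (j * N + i) * lam ^ (j * N + i)) = lam ^ i * g i" .
      qed
      finally show ?thesis .
    qed
    define t where "t i = (1 - \<rho>) * Re (g i)" for i
    have Img: "Im (g i) = 0" for i
      unfolding g_def Im_suminf[OF sg] by (simp add: Ima)
    have normg: "norm (g i) \<le> 1 / (1 - \<rho>)" for i
      unfolding g_def geo(2)[symmetric] by (rule norm_suminf_le[OF _ geo(1)]) (simp only: ng order_refl)
    have tb: "\<forall>i<N. \<bar>t i\<bar> \<le> 1"
    proof (intro allI impI)
      fix i
      have "\<bar>Re (g i)\<bar> \<le> 1 / (1 - \<rho>)" using abs_Re_le_cmod[of "g i"] normg[of i] by linarith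
      then have "(1 - \<rho>) * \<bar>Re (g i)\<bar> \<le> (1 - \<rho>) * (1 / (1 - \<rho>))"
        using \<rho> by (intro mult_left_mono) auto
      then show "\<bar>t i\<bar> \<le> 1" using \<rho> by (simp add: t_def abs_mult)
    qed
    have "of_real (t i / (1 - \<rho>)) = g i" for i
      using \<rho> Img[of i] by (intro complex_eqI) (simp_all add: t_def)
    then have "z = (\<Sum>i<N. of_real (t i / (1 - \<rho>)) * lam ^ i)" unfolding z by (simp add: mult.commute)
    then show "z \<in> {z. \<exists>t. (\<forall>i<N. \<bar>t i\<bar> \<le> 1) \<and> z = (\<Sum>i<N. of_real (t i / (1 - \<rho>)) * lam ^ i)}"
      using tb by blast
  next
    fix z assume "z \<in> {z. \<exists>t. (\<forall>i<N. \<bar>t i\<bar> \<le> 1) \<and> z = (\<Sum>i<N. of_real (t i / (1 - \<rho>)) * lam ^ i)}"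
    then obtain t where t: "\<forall>i<N. \<bar>t i\<bar> \<le> 1" "z = (\<Sum>i<N. of_real (t i / (1 - \<rho>)) * lam ^ i)" by blast
    define x where "x i = t i / (1 - \<rho>)" for i
    have xb: "\<bar>x i\<bar> \<le> 1 / (1 - \<rho>)" if "i < N" for i
      using t(1) that \<rho> by (simp add: x_def abs_divide divide_right_mono)
    define a where "a k = complex_of_real (\<sigma> ^ (k div N) * gb \<rho> (x (k mod N)) (k div N))" for k
    have apm: "a k \<in> {-1, 1}" for k
    proof -
      have "\<sigma> ^ (k div N) * gb \<rho> (x (k mod N)) (k div N) \<in> {1, -1}"
        using sigma_pow_pm[OF \<sigma>, of "k div N"] gb_pm[of \<rho> "x (k mod N)" "k div N"] by auto
      then show ?thesis unfolding a_def by (metis insertE of_real_1 of_real_minus insertCI singletonD)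
    qed
    have na: "norm (a k) = 1" for k using apm[of k] by auto
    have "(\<Sum>k. a k * lam ^ k) = (\<Sum>i<N. \<Sum>j. a (j * N + i) * lam ^ (j * N + i))"
      by (rule regroup[OF N0, of r]) (use r nl na in \<open>auto simp: norm_mult norm_power\<close>)
    also have "\<dots> = (\<Sum>i<N. of_real (x i) * lam ^ i)"
    proof (rule sum.cong[OF refl])
      fix i assume i: "i \<in> {..<N}"
      have e: "a (j * N + i) * lam ^ (j * N + i) = lam ^ i * of_real (gb \<rho> (x i) j * \<rho> ^ j)" for j
      proof -
        have "(j * N + i) div N = j" "(j * N + i) mod N = i" using i N0 by auto
        then have "a (j * N + i) * lam ^ (j * N + i) =
            lam ^ i * of_real ((\<sigma> ^ j * \<sigma> ^ j) * (gb \<rho> (x i) j * \<rho> ^ j))"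
          unfolding lam_pow[OF lN'] a_def by (simp add: power_mult_distrib ac_simps)
        then show ?thesis using sigma_pow[OF \<sigma>, of j] by simp
      qed
      have "(\<lambda>j. lam ^ i * of_real (gb \<rho> (x i) j * \<rho> ^ j)) sums (lam ^ i * of_real (x i))"
        by (intro sums_mult sums_of_real gr_sums) (use \<rho> xb i in auto)
      then show "(\<Sum>j. a (j * N + i) * lam ^ (j * N + i)) = of_real (x i) * lam ^ i"
        unfolding e by (simp add: sums_iff mult.commute)
    qed
    finally have "(\<Sum>k. a k * lam ^ k) = z" unfolding t(2) x_def .
    then have "z = (\<Sum>k. a k * lam ^ k)" by simp
    then show "z \<in> attractor lam" unfolding attractor_def using apm by blast
  qed
qed

lemma reindex_zono:
  fixes lam :: complex and \<pi> :: "nat \<Rightarrow> nat"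
  assumes bij: "bij_betw \<pi> {..<N} {..<N}" and \<epsilon>: "\<forall>i<N. \<epsilon> i \<in> {1, -1::real}"
    and lp: "\<forall>i<N. lam ^ i = of_real (\<epsilon> i * r ^ i) * ww N ^ \<pi> i"
  shows "{z. \<exists>t. (\<forall>i<N. \<bar>t i\<bar> \<le> 1) \<and> z = (\<Sum>i<N. of_real (t i / D) * lam ^ i)}
         = zono N (\<lambda>p. r ^ (inv_into {..<N} \<pi> p) / D)"
proof -
  define \<pi>' where "\<pi>' = inv_into {..<N} \<pi>"
  define c where "c p = r ^ (\<pi>' p) / D" for p
  have inj: "inj_on \<pi> {..<N}" using bij by (rule bij_betw_imp_inj_on)
  have img: "\<pi> ` {..<N} = {..<N}" using bij by (rule bij_betw_imp_surj_on)
  have \<pi>'\<pi>: "\<pi>' (\<pi> i) = i" if "i < N" for i using inv_into_f_f[OF inj] that by (simp add: \<pi>'_def)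
  have \<pi>'N: "\<pi>' p < N" if "p < N" for p
    using inv_into_into[of p \<pi> "{..<N}"] img that by (simp add: \<pi>'_def)
  have \<pi>\<pi>': "\<pi> (\<pi>' p) = p" if "p < N" for p
    using f_inv_into_f[of p \<pi> "{..<N}"] img that by (simp add: \<pi>'_def)
  have re: "(\<Sum>p<N. of_real (s p * c p) * ww N ^ p) = (\<Sum>i<N. of_real (s (\<pi> i) * (r ^ i / D)) * ww N ^ \<pi> i)" for s
  proof -
    have "(\<Sum>p<N. of_real (s p * c p) * ww N ^ p) = (\<Sum>i<N. of_real (s (\<pi> i) * c (\<pi> i)) * ww N ^ \<pi> i)"
      using sum.reindex_bij_betw[OF bij, of "\<lambda>p. of_real (s p * c p) * ww N ^ p"] by simp
    also have "\<dots> = (\<Sum>i<N. of_real (s (\<pi> i) * (r ^ i / D)) * ww N ^ \<pi> i)"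
      by (rule sum.cong) (auto simp: c_def \<pi>'\<pi>)
    finally show ?thesis .
  qed
  have ee: "\<epsilon> i * \<epsilon> i = 1" if "i < N" for i using \<epsilon> that by auto
  show ?thesis unfolding \<pi>'_def[symmetric] c_def[abs_def, symmetric]
  proof (intro equalityI subsetI)
    fix z assume "z \<in> {z. \<exists>t. (\<forall>i<N. \<bar>t i\<bar> \<le> 1) \<and> z = (\<Sum>i<N. of_real (t i / D) * lam ^ i)}"
    then obtain t where t: "\<forall>i<N. \<bar>t i\<bar> \<le> 1" "z = (\<Sum>i<N. of_real (t i / D) * lam ^ i)" by blast
    define s where "s p = \<epsilon> (\<pi>' p) * t (\<pi>' p)" for p
    have sb: "\<forall>p<N. \<bar>s p\<bar> \<le> 1"
    proof (intro allI impI)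
      fix p assume "p < N"
      then have "\<pi>' p < N" by (rule \<pi>'N)
      then have "\<bar>\<epsilon> (\<pi>' p)\<bar> = 1" "\<bar>t (\<pi>' p)\<bar> \<le> 1" using \<epsilon> t(1) by auto
      then show "\<bar>s p\<bar> \<le> 1" by (simp add: s_def abs_mult)
    qed
    have "z = (\<Sum>i<N. of_real (s (\<pi> i) * (r ^ i / D)) * ww N ^ \<pi> i)"
      unfolding t(2)
    proof (rule sum.cong[OF refl])
      fix i assume "i \<in> {..<N}"
      then have i: "i < N" by simp
      have "of_real (t i / D) * lam ^ i = of_real (t i / D) * of_real (\<epsilon> i * r ^ i) * ww N ^ \<pi> i"
        using lp i by simp
      also have "\<dots> = of_real (s (\<pi> i) * (r ^ i / D)) * ww N ^ \<pi> i"
        by (simp add: s_def \<pi>'\<pi>[OF i] field_simps)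
      finally show "of_real (t i / D) * lam ^ i = of_real (s (\<pi> i) * (r ^ i / D)) * ww N ^ \<pi> i" .
    qed
    then show "z \<in> zono N c" unfolding zono_def re[symmetric] using sb by blast
  next
    fix z assume "z \<in> zono N c"
    then obtain s where s: "\<forall>p<N. \<bar>s p\<bar> \<le> 1" "z = (\<Sum>p<N. of_real (s p * c p) * ww N ^ p)"
      unfolding zono_def by blast
    define t where "t i = \<epsilon> i * s (\<pi> i)" for i
    have tb: "\<forall>i<N. \<bar>t i\<bar> \<le> 1"
      using s(1) \<epsilon> bij_betwE[OF bij] by (auto simp: t_def abs_mult)
    have "z = (\<Sum>i<N. of_real (t i / D) * lam ^ i)"
      unfolding s(2) re
    proof (rule sum.cong[OF refl])
      fix i assume "i \<in> {..<N}"
      then have i: "i < N" by simp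
      have "of_real (t i / D) * lam ^ i = of_real (t i / D) * of_real (\<epsilon> i * r ^ i) * ww N ^ \<pi> i"
        using lp i by simp
      also have "\<dots> = of_real ((\<epsilon> i * \<epsilon> i) * (s (\<pi> i) * (r ^ i / D))) * ww N ^ \<pi> i"
        by (simp add: t_def field_simps)
      also have "\<dots> = of_real (s (\<pi> i) * (r ^ i / D)) * ww N ^ \<pi> i" using ee[OF i] by simp
      finally show "of_real (s (\<pi> i) * (r ^ i / D)) * ww N ^ \<pi> i = of_real (t i / D) * lam ^ i"
        by (rule sym)
    qed
    then show "z \<in> {z. \<exists>t. (\<forall>i<N. \<bar>t i\<bar> \<le> 1) \<and> z = (\<Sum>i<N. of_real (t i / D) * lam ^ i)}"
      using tb by blast
  qed
qed

lemma cis_int_shift: "cis (x + 2 * pi * real_of_int q) = cis x"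
proof -
  have "cis (2 * pi * real_of_int q) = 1" by (rule cis_multiple_2pi) simp
  then show ?thesis by (simp add: cis_mult[symmetric])
qed

lemma generic:
  fixes N :: nat and M :: int and r :: real
  assumes N: "N \<ge> 2" and g: "gcd M (int N) = 1" and r1: "2 powr (-1 / real N) \<le> r" and r2: "r < 1"
  shows "polygon_all_angles (attractor (of_real r * cis (pi * real_of_int M / real N))) (2*N) (pi * (real N - 1) / real N)
       \<and> interior (attractor (of_real r * cis (pi * real_of_int M / real N))) \<noteq> {}"
proof -
  define lam where "lam = of_real r * cis (pi * real_of_int M / real N)"
  have N0: "N > 0" using N by simp
  have Nr: "real N > 0" using N0 by simp
  have r0: "r > 0" using r1 by (smt (verit) powr_gt_zero)
  have half: "1/2 \<le> r ^ N"
  proof -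
    have "(2 powr (-1 / real N)) ^ N \<le> r ^ N" using r1 by (intro power_mono) auto
    moreover have "(2 powr (-1 / real N)) ^ N = 1/2"
    proof -
      have "(2 powr (-1 / real N)) ^ N = 2 powr (-1 / real N * real N)"
        by (simp add: powr_realpow[symmetric] powr_powr)
      also have "\<dots> = 1/2" using Nr by (simp add: powr_minus_divide)
      finally show ?thesis .
    qed
    ultimately show ?thesis by simp
  qed
  have nl: "norm lam = r" using r0 by (simp add: lam_def norm_mult)
  have lamp: "lam ^ i = of_real (r ^ i) * cis (pi * real_of_int (M * int i) / real N)" for i
    by (simp add: lam_def power_mult_distrib Complex.DeMoivre field_simps)
  define C where "C = cis (pi * real_of_int M)"
  have "C ^ 2 = 1"
  proof -
    have "C ^ 2 = cis (2 * pi * real_of_int M)" by (simp add: C_def Complex.DeMoivre field_simps)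
    also have "\<dots> = 1" by (rule cis_multiple_2pi) simp
    finally show ?thesis .
  qed
  then have C: "C = 1 \<or> C = -1" by (simp add: power2_eq_1_iff)
  define \<sigma> where "\<sigma> = (if C = 1 then 1 else - 1 :: real)"
  have \<sigma>: "\<sigma> \<in> {1, -1}" by (simp add: \<sigma>_def)
  have lN: "lam ^ N = of_real (\<sigma> * r ^ N)"
  proof -
    have "lam ^ N = of_real (r ^ N) * C" unfolding lamp C_def using Nr by (simp add: field_simps)
    then show ?thesis using C by (auto simp: \<sigma>_def)
  qed
  define l where "l i = (M * int i) mod (2 * int N)" for i
  define \<pi> where "\<pi> i = nat ((M * int i) mod int N)" for i
  define \<epsilon> where "\<epsilon> i = (if l i < int N then 1 else - 1 :: real)" for i
  have cis_eq: "cis (pi * real_of_int (M * int i) / real N) = of_real (\<epsilon> i) * ww N ^ \<pi> i" for i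
  proof -
    define q where "q = (M * int i) div (2 * int N)"
    have Mi: "M * int i = l i + 2 * int N * q" by (simp add: l_def q_def)
    have lb: "0 \<le> l i" "l i < 2 * int N" using N0 by (simp_all add: l_def)
    have "pi * real_of_int (M * int i) / real N = pi * real_of_int (l i) / real N + 2 * pi * real_of_int q"
      unfolding Mi using Nr by (simp add: field_simps)
    then have c1: "cis (pi * real_of_int (M * int i) / real N) = cis (pi * real_of_int (l i) / real N)"
      by (simp add: cis_int_shift)
    have lm: "(M * int i) mod int N = l i mod int N"
      unfolding l_def by (simp add: mod_mod_cancel)
    show ?thesis
    proof (cases "l i < int N")
      case True
      then have "\<pi> i = nat (l i)" using lb by (simp add: \<pi>_def lm)
      then show ?thesis using c1 True lb by (simp add: \<epsilon>_def ww_pow)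
    next
      case False
      have "l i mod int N = (l i - int N + int N) mod int N" by simp
      also have "\<dots> = (l i - int N) mod int N" by (rule mod_add_self2)
      also have "\<dots> = l i - int N" using False lb by (intro mod_pos_pos_trivial) auto
      finally have li: "l i mod int N = l i - int N" .
      then have "\<pi> i = nat (l i - int N)" by (simp add: \<pi>_def lm)
      moreover have "pi * real_of_int (l i) / real N = pi * real_of_int (l i - int N) / real N + pi"
        using Nr by (simp add: field_simps)
      ultimately show ?thesis using c1 False lb
        by (simp add: \<epsilon>_def ww_pow cis_mult[symmetric])
    qed
  qed
  have lp: "\<forall>i<N. lam ^ i = of_real (\<epsilon> i * r ^ i) * ww N ^ \<pi> i"
    using lamp cis_eq by (simp add: mult.assoc)
  have \<epsilon>: "\<forall>i<N. \<epsilon> i \<in> {1, -1}" by (simp add: \<epsilon>_def)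
  have inj: "inj_on \<pi> {..<N}"
  proof (rule inj_onI)
    fix i j assume i: "i \<in> {..<N}" and j: "j \<in> {..<N}" and e: "\<pi> i = \<pi> j"
    have "(M * int i) mod int N = (M * int j) mod int N"
      using e N0 unfolding \<pi>_def by (simp add: nat_eq_iff2)
    then have "int N dvd M * int i - M * int j" by (simp add: mod_eq_dvd_iff)
    then have "int N dvd M * (int i - int j)" by (simp add: right_diff_distrib)
    moreover have "coprime (int N) M" using g by (simp add: coprime_iff_gcd_eq_1 gcd.commute)
    ultimately have "int N dvd (int i - int j)" by (simp add: coprime_dvd_mult_right_iff)
    then have "int i mod int N = int j mod int N" by (simp add: mod_eq_dvd_iff)
    then show "i = j" using i j by simp
  qed
  have bij: "bij_betw \<pi> {..<N} {..<N}"
  proof -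
    have sub: "\<pi> ` {..<N} \<subseteq> {..<N}" using N0 by (auto simp: \<pi>_def nat_less_iff)
    have "\<pi> ` {..<N} = {..<N}" by (rule endo_inj_surj[OF _ sub inj]) simp
    then show ?thesis using inj by (simp add: bij_betw_def)
  qed
  define c where "c p = r ^ (inv_into {..<N} \<pi> p) / (1 - r ^ N)" for p
  have rN: "r ^ N < 1" using r0 r2 N0 by (simp add: power_less_one_iff)
  have cpos: "\<forall>p<N. c p > 0" using r0 rN by (simp add: c_def)
  have "attractor lam = zono N c"
    unfolding attr_eq[OF N0 r0 r2 nl lN \<sigma> half] c_def
    by (rule reindex_zono[OF bij \<epsilon> lp])
  then show ?thesis
    using zono_poly[OF N cpos] zono_interior[OF N cpos] by (simp add: lam_def)
qed

theorem mainTheorem13: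
  shows "(\<forall>(n::nat) (m::int) (r::real).
            n \<ge> 2 \<and> gcd m (int n) = 1 \<and> 2 powr (- 1 / real n) \<le> r \<and> r < 1 \<longrightarrow>
            (let lam = complex_of_real r * exp (\<i> * complex_of_real (pi * real_of_int m / real n))
             in polygon_all_angles (attractor lam) (2 * n) (pi * (real n - 1) / real n)
                \<and> interior (attractor lam) \<noteq> {}))
       \<and> (\<forall>(n::nat) (m::int) (r::real).
            n \<ge> 1 \<and> gcd m (int (2 * n + 1)) = 1 \<and> 2 powr (- 1 / real (2 * n + 1)) \<le> r \<and> r < 1 \<longrightarrow>
            (let lam = complex_of_real r *
                     exp (\<i> * complex_of_real (2 * pi * real_of_int m / real (2 * n + 1)))
             in polygon_all_angles (attractor lam) (4 * n + 2) (2 * real n * pi / real (2 * n + 1))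
                \<and> interior (attractor lam) \<noteq> {}))"
proof (intro conjI allI impI)
  fix n :: nat and m :: int and r :: real
  assume h: "n \<ge> 2 \<and> gcd m (int n) = 1 \<and> 2 powr (- 1 / real n) \<le> r \<and> r < 1"
  have e: "complex_of_real r * exp (\<i> * complex_of_real (pi * real_of_int m / real n))
      = of_real r * cis (pi * real_of_int m / real n)" by (simp add: cis_conv_exp)
  show "let lam = complex_of_real r * exp (\<i> * complex_of_real (pi * real_of_int m / real n))
             in polygon_all_angles (attractor lam) (2 * n) (pi * (real n - 1) / real n)
                \<and> interior (attractor lam) \<noteq> {}"
    unfolding Let_def e using generic[of n m r] h by blast
next
  fix n :: nat and m :: int and r :: real
  assume h: "n \<ge> 1 \<and> gcd m (int (2 * n + 1)) = 1 \<and> 2 powr (- 1 / real (2 * n + 1)) \<le> r \<and> r < 1"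
  define N where "N = 2 * n + 1"
  have e: "complex_of_real r * exp (\<i> * complex_of_real (2 * pi * real_of_int m / real (2 * n + 1)))
      = of_real r * cis (pi * real_of_int (2 * m) / real N)"
  proof -
    have "2 * pi * real_of_int m / real (2 * n + 1) = pi * real_of_int (2 * m) / real N"
      by (simp add: N_def)
    then show ?thesis by (simp only: cis_conv_exp)
  qed
  have N: "N \<ge> 2" using h by (simp add: N_def)
  have g: "gcd (2 * m) (int N) = 1"
  proof -
    have "coprime m (int N)" using h by (simp add: coprime_iff_gcd_eq_1 N_def)
    moreover have "coprime 2 (int N)" by (simp add: coprime_left_2_iff_odd N_def)
    ultimately show ?thesis by (simp add: coprime_iff_gcd_eq_1[symmetric] coprime_mult_left_iff)
  qed
  have k: "2 * N = 4 * n + 2" by (simp add: N_def)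
  have th: "pi * (real N - 1) / real N = 2 * real n * pi / real (2 * n + 1)" by (simp add: N_def)
  have r: "2 powr (- 1 / real N) \<le> r" "r < 1" using h by (simp_all add: N_def)
  show "let lam = complex_of_real r *
                     exp (\<i> * complex_of_real (2 * pi * real_of_int m / real (2 * n + 1)))
             in polygon_all_angles (attractor lam) (4 * n + 2) (2 * real n * pi / real (2 * n + 1))
                \<and> interior (attractor lam) \<noteq> {}"
    unfolding Let_def e using generic[OF N g r] unfolding k th by blast
qed

end
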